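(* Let $\mathbf d=(d_1,\ldots,d_n)$ be a degree sequence and $v\in[n]$ such that $\mathbb P(\mathfrak t_n(v)>0)>0$ (equivalently, $d_w>1$ for some $w\ne v$). Then for every $k\ge2$ with $\mathbb P(\mathfrak s_n(v)=k,\mathfrak t_n(v)>0)>0$, \[\mathbb P\big(\mathfrak t_n(v)=j\,\big|\,\mathfrak s_n(v)=k,\ \mathfrak t_n(v)>0\big)=\frac{1}{k-1},\qquad j\in[k-1].\]
   Context: A degree sequence is $\mathbf d=(d_1,\ldots,d_n)\in\mathbb N_0^n$ with $\sum_j d_j=n$. Let $\mathfrak F(\mathbf d)=\{f:[n]\to[n]: |f^{-1}(\{i\})|=d_i\ \forall i\}$ and $F$ uniform on $\mathfrak F(\mathbf d)$. For $f:V\to V$, $v\in V$: six-length $\mathfrak s_f(v)=\min\{k\in\mathbb N: f^{(k)}(v)\in\{f^{(j)}(v):0\le j\le k-1\}\}$ ($f^{(k)}$ the $k$-fold composition, $f^{(0)}=\mathrm{id}$); tail-length $\mathfrak t_f(v)$ is the unique integer with $0\le\mathfrak t_f(v)<\mathfrak s_f(v)$ and $f^{(\mathfrak s_f(v))}(v)=f^{(\mathfrak t_f(v))}(v)$. $\mathfrak s_n(v)=\mathfrak s_F(v)$, $\mathfrak t_n(v)=\mathfrak t_F(v)$. *)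

theory Defs
  imports "HOL-Probability.Probability"
begin

definition degree_seq :: "nat \<Rightarrow> (nat \<Rightarrow> nat) \<Rightarrow> bool" where
  "degree_seq n d \<longleftrightarrow> (\<Sum>i\<in>{1..n}. d i) = n"

definition Fd :: "nat \<Rightarrow> (nat \<Rightarrow> nat) \<Rightarrow> (nat \<Rightarrow> nat) set" where
  "Fd n d = {f \<in> {1..n} \<rightarrow>\<^sub>E {1..n}. \<forall>i\<in>{1..n}. card {x\<in>{1..n}. f x = i} = d i}"

definition six_len :: "('a \<Rightarrow> 'a) \<Rightarrow> 'a \<Rightarrow> nat" where
  "six_len f v = (LEAST k. k \<ge> 1 \<and> (f ^^ k) v \<in> (\<lambda>j. (f ^^ j) v) ` {0..<k})"

definition tail_len :: "('a \<Rightarrow> 'a) \<Rightarrow> 'a \<Rightarrow> nat" where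
  "tail_len f v = (THE t. t < six_len f v \<and> (f ^^ six_len f v) v = (f ^^ t) v)"

definition Pr :: "nat \<Rightarrow> (nat \<Rightarrow> nat) \<Rightarrow> ((nat \<Rightarrow> nat) \<Rightarrow> bool) \<Rightarrow> real" where
  "Pr n d P = measure_pmf.prob (pmf_of_set (Fd n d)) {f. P f}"

end

theory Submission
  imports Defs
begin

lemma funpow_in:
  assumes "f \<in> Fd n d" "v \<in> {1..n}"
  shows "(f^^i) v \<in> {1..n}"
proof -
  have "\<forall>x\<in>{1..n}. f x \<in> {1..n}" using assms(1) unfolding Fd_def PiE_def Pi_def by blast
  then show ?thesis using assms(2) by (induction i) auto
qed

lemma char:
  assumes inj: "inj_on (\<lambda>i. (f^^i) v) {0..<k}" and "t<k" and eq: "(f^^k) v = (f^^t) v"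
  shows "six_len f v = k \<and> tail_len f v = t"
proof -
  have s: "six_len f v = k" unfolding six_len_def
  proof (rule Least_equality)
    show "1 \<le> k \<and> (f^^k) v \<in> (\<lambda>j. (f^^j) v) ` {0..<k}" using assms(2,3) by force
    fix m assume m: "1 \<le> m \<and> (f^^m) v \<in> (\<lambda>j. (f^^j) v) ` {0..<m}"
    show "k \<le> m"
    proof (rule ccontr)
      assume "\<not> k \<le> m"
      from m obtain j where j: "j<m" "(f^^m) v = (f^^j) v" by auto
      moreover have "m \<in> {0..<k}" "j \<in> {0..<k}" using j \<open>\<not> k \<le> m\<close> by auto
      ultimately have "m = j" using inj_onD[OF inj] by blast
      then show False using j by simp
    qed
  qed
  have "tail_len f v = t" unfolding tail_len_def s
  proof (rule the_equality)
    show "t < k \<and> (f ^^ k) v = (f ^^ t) v" using assms(2,3) by blast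
    fix t' assume h: "t' < k \<and> (f ^^ k) v = (f ^^ t') v"
    then have "(f ^^ t') v = (f ^^ t) v" using eq by simp
    moreover have "t' \<in> {0..<k}" "t \<in> {0..<k}" using h assms(2) by auto
    ultimately show "t' = t" using inj_onD[OF inj] by blast
  qed
  with s show ?thesis by simp
qed

lemma exists_cyc:
  assumes "f \<in> Fd n d" "v \<in> {1..n}"
  shows "\<exists>k t. inj_on (\<lambda>i. (f^^i) v) {0..<k} \<and> t<k \<and> (f^^k) v = (f^^t) v"
proof -
  let ?S = "{m. 1 \<le> m \<and> (f^^m) v \<in> (\<lambda>j. (f^^j) v) ` {0..<m}}"
  have "\<not> inj_on (\<lambda>i. (f^^i) v) {0..n}"
  proof
    assume "inj_on (\<lambda>i. (f^^i) v) {0..n}"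
    then have "card ((\<lambda>i. (f^^i) v) ` {0..n}) = Suc n" by (simp add: card_image)
    moreover have "card ((\<lambda>i. (f^^i) v) ` {0..n}) \<le> card {1..n}"
      apply (rule card_mono) apply simp using funpow_in[OF assms] by blast
    ultimately show False by simp
  qed
  then obtain i i' where ii: "i\<in>{0..n}" "i'\<in>{0..n}" "i\<noteq>i'" "(f^^i) v = (f^^i') v"
    by (auto simp: inj_on_def)
  have "?S \<noteq> {}"
  proof (cases "i < i'")
    case True
    have "(f^^i') v \<in> (\<lambda>j. (f^^j) v) ` {0..<i'}"
      using ii(4) True by (intro image_eqI[of _ _ i]) auto
    then have "i' \<in> ?S" using True by simp
    then show ?thesis by blast
  next
    case False
    then have F: "i' < i" using ii(3) by simp
    have "(f^^i) v \<in> (\<lambda>j. (f^^j) v) ` {0..<i}"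
      using ii(4) F by (intro image_eqI[of _ _ i']) auto
    then have "i \<in> ?S" using F by simp
    then show ?thesis by blast
  qed
  then obtain m0 where "m0 \<in> ?S" by blast
  define k where "k = (LEAST m. m \<in> ?S)"
  have kS: "k \<in> ?S" unfolding k_def by (rule LeastI[of _ m0]) fact
  then obtain t where t: "t<k" "(f^^k) v = (f^^t) v" by auto
  have "inj_on (\<lambda>i. (f^^i) v) {0..<k}"
  proof (rule ccontr)
    assume "\<not> inj_on (\<lambda>i. (f^^i) v) {0..<k}"
    then obtain i1 i2 where "i1 < k" "i2 < k" "i1 \<noteq> i2" "(f^^i1) v = (f^^i2) v"
      by (auto simp: inj_on_def)
    then obtain a b where ab: "a < b" "b < k" "(f^^a) v = (f^^b) v"
    proof (cases "i1 < i2")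
      case True then show ?thesis using that \<open>i2 < k\<close> \<open>(f^^i1) v = (f^^i2) v\<close> by blast
    next
      case False then have "i2 < i1" using \<open>i1 \<noteq> i2\<close> by simp
      then show ?thesis using that \<open>i1 < k\<close> \<open>(f^^i1) v = (f^^i2) v\<close> by metis
    qed
    have "(f^^b) v \<in> (\<lambda>j. (f^^j) v) ` {0..<b}"
      using ab by (intro image_eqI[of _ _ a]) auto
    then have "b \<in> ?S" using ab by simp
    then have "k \<le> b" unfolding k_def by (rule Least_le)
    with ab(2) show False by linarith
  qed
  with t show ?thesis by blast
qed

lemma A_iff:
  assumes "f \<in> Fd n d" "v \<in> {1..n}"
  shows "(six_len f v = k \<and> tail_len f v = t) \<longleftrightarrow>
    (inj_on (\<lambda>i. (f^^i) v) {0..<k} \<and> t<k \<and> (f^^k) v = (f^^t) v)"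
proof
  assume h: "six_len f v = k \<and> tail_len f v = t"
  obtain k0 t0 where H: "inj_on (\<lambda>i. (f^^i) v) {0..<k0} \<and> t0<k0 \<and> (f^^k0) v = (f^^t0) v"
    using exists_cyc[OF assms] by blast
  then have "six_len f v = k0 \<and> tail_len f v = t0" using char[of f v k0 t0] by blast
  then have "k = k0" "t = t0" using h by argo+
  then show "inj_on (\<lambda>i. (f^^i) v) {0..<k} \<and> t<k \<and> (f^^k) v = (f^^t) v"
    using H by blast
next
  assume "inj_on (\<lambda>i. (f^^i) v) {0..<k} \<and> t<k \<and> (f^^k) v = (f^^t) v"
  then show "six_len f v = k \<and> tail_len f v = t" using char[of f v k t] by blast
qed

definition rho :: "nat \<Rightarrow> nat \<Rightarrow> nat \<Rightarrow> nat \<Rightarrow> nat" where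
  "rho a b c z = (if z = a then b else if z = b then c else if z = c then a else z)"

definition tau :: "nat \<Rightarrow> nat \<Rightarrow> nat" where
  "tau p i = (if i = p then Suc p else if i = Suc p then p else i)"

definition Op :: "nat \<Rightarrow> nat \<Rightarrow> (nat \<Rightarrow> nat) \<Rightarrow> (nat \<Rightarrow> nat)" where
  "Op v p f = f \<circ> rho ((f^^(p-1)) v) ((f^^p) v) ((f^^(Suc p)) v)"

lemma card_comp_perm:
  assumes "bij_betw r S S"
  shows "card {z\<in>S. f (r z) = i} = card {z\<in>S. f z = i}"
proof -
  have inj: "inj_on r S" and surj: "r ` S = S"
    using assms by (simp_all add: bij_betw_imp_inj_on bij_betw_imp_surj_on)
  have img: "r ` {z\<in>S. f (r z) = i} = {z\<in>S. f z = i}"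
  proof
    show "r ` {z\<in>S. f (r z) = i} \<subseteq> {z\<in>S. f z = i}"
    proof
      fix y assume "y \<in> r ` {z\<in>S. f (r z) = i}"
      then obtain z where "z \<in> S" "f (r z) = i" "y = r z" by blast
      moreover have "r z \<in> S" using surj \<open>z \<in> S\<close> by blast
      ultimately show "y \<in> {z\<in>S. f z = i}" by simp
    qed
    show "{z\<in>S. f z = i} \<subseteq> r ` {z\<in>S. f (r z) = i}"
    proof
      fix z assume z: "z \<in> {z\<in>S. f z = i}"
      then have "z \<in> r ` S" using surj by simp
      then obtain w where "w \<in> S" "z = r w" by blast
      then show "z \<in> r ` {z\<in>S. f (r z) = i}" using z by blast
    qed
  qed
  have "inj_on r {z\<in>S. f (r z) = i}"
    using inj by (rule inj_on_subset) blast
  then have "card (r ` {z\<in>S. f (r z) = i}) = card {z\<in>S. f (r z) = i}" by (rule card_image)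
  then show ?thesis unfolding img by simp
qed

lemma rho_bij:
  assumes "a \<in> S" "b \<in> S" "c \<in> S" "a \<noteq> b" "b \<noteq> c" "a \<noteq> c"
  shows "bij_betw (rho a b c) S S"
proof (rule bij_betw_byWitness[where f' = "rho a c b"])
  show "\<forall>x\<in>S. rho a c b (rho a b c x) = x" using assms unfolding rho_def by simp
  show "\<forall>x\<in>S. rho a b c (rho a c b x) = x" using assms unfolding rho_def by simp
  show "rho a b c ` S \<subseteq> S" using assms unfolding rho_def by auto
  show "rho a c b ` S \<subseteq> S" using assms unfolding rho_def by auto
qed

lemma step_abs:
  fixes x :: "nat \<Rightarrow> nat"
  assumes neq: "\<And>m m'. m<k \<Longrightarrow> m'<k \<Longrightarrow> m\<noteq>m' \<Longrightarrow> x m \<noteq> x m'"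
    and fx: "\<And>m. F (x m) = x (Suc m)" and p: "1\<le>p" "Suc p<k" and i: "i<k"
  shows "F (rho (x (p-1)) (x p) (x (Suc p)) (x (tau p i))) = x (tau p (Suc i))"
proof -
  have ab: "x (p-1) \<noteq> x p" and bc: "x p \<noteq> x (Suc p)" and ac: "x (p-1) \<noteq> x (Suc p)"
    using neq p by auto
  consider "i < p-1" | "i = p-1" | "i = p" | "i = Suc p" | "Suc p < i" using p by linarith
  then show ?thesis
  proof cases
    case 1
    then have "x i \<noteq> x (p-1)" "x i \<noteq> x p" "x i \<noteq> x (Suc p)" using neq p i by auto
    moreover have "tau p i = i" "tau p (Suc i) = Suc i" using 1 by (auto simp: tau_def)
    ultimately show ?thesis using fx by (simp add: rho_def)
  next
    case 2
    then have "tau p i = p-1" "tau p (Suc i) = Suc p" using p by (auto simp: tau_def)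
    then show ?thesis using 2 fx ab by (simp add: rho_def)
  next
    case 3
    then have "tau p i = Suc p" "tau p (Suc i) = p" using p by (auto simp: tau_def)
    moreover have "F (x (p-1)) = x p" using fx p by (metis Suc_pred' less_le_trans zero_less_one)
    ultimately show ?thesis using 3 ab bc ac by (simp add: rho_def)
  next
    case 4
    then have "tau p i = p" "tau p (Suc i) = Suc (Suc p)" using p by (auto simp: tau_def)
    then show ?thesis using 4 fx ab bc ac by (simp add: rho_def)
  next
    case 5
    then have "x i \<noteq> x (p-1)" "x i \<noteq> x p" "x i \<noteq> x (Suc p)" using neq p i by auto
    moreover have "tau p i = i" "tau p (Suc i) = Suc i" using 5 by (auto simp: tau_def)
    ultimately show ?thesis using fx by (simp add: rho_def)
  qed
qed

lemma Op_orbit: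
  assumes inj: "inj_on (\<lambda>i. (f^^i) v) {0..<k}" and p: "1\<le>p" "Suc p<k"
  shows "i \<le> k \<Longrightarrow> (Op v p f ^^ i) v = (f^^(tau p i)) v"
proof (induction i)
  case 0
  then show ?case using p by (simp add: tau_def)
next
  case (Suc i)
  have neq: "\<And>m m'. m<k \<Longrightarrow> m'<k \<Longrightarrow> m\<noteq>m' \<Longrightarrow> (f^^m) v \<noteq> (f^^m') v"
    using inj_onD[OF inj] by fastforce
  have fx: "\<And>m. f ((f^^m) v) = (f^^(Suc m)) v" by simp
  have "(Op v p f ^^ Suc i) v = Op v p f ((Op v p f ^^ i) v)" by simp
  also have "\<dots> = Op v p f ((f^^(tau p i)) v)" using Suc by simp
  also have "\<dots> = f (rho ((f^^(p-1)) v) ((f^^p) v) ((f^^(Suc p)) v) ((f^^(tau p i)) v))"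
    by (simp add: Op_def)
  also have "\<dots> = (f^^(tau p (Suc i))) v"
    using step_abs[of k "\<lambda>m. (f^^m) v" f p i, OF neq fx p] Suc.prems by simp
  finally show ?case .
qed

lemma Op_props:
  assumes F: "f \<in> Fd n d" and vn: "v \<in> {1..n}" and inj: "inj_on (\<lambda>i. (f^^i) v) {0..<k}"
    and t: "t<k" and eq: "(f^^k) v = (f^^t) v" and p: "1\<le>p" "Suc p<k"
  shows "Op v p f \<in> Fd n d \<and> inj_on (\<lambda>i. (Op v p f^^i) v) {0..<k} \<and> tau p t < k
    \<and> (Op v p f^^k) v = (Op v p f ^^ tau p t) v \<and> Op v p (Op v p f) = f"
proof -
  define a where "a = (f^^(p-1)) v"
  define b where "b = (f^^p) v"
  define c where "c = (f^^(Suc p)) v"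
  have neq: "\<And>m m'. m<k \<Longrightarrow> m'<k \<Longrightarrow> m\<noteq>m' \<Longrightarrow> (f^^m) v \<noteq> (f^^m') v"
    using inj_onD[OF inj] by fastforce
  have ab: "a \<noteq> b" unfolding a_def b_def by (rule neq) (use p in auto)
  have bc: "b \<noteq> c" unfolding b_def c_def by (rule neq) (use p in auto)
  have ac: "a \<noteq> c" unfolding a_def c_def by (rule neq) (use p in auto)
  have abcS: "a \<in> {1..n}" "b \<in> {1..n}" "c \<in> {1..n}"
    unfolding a_def b_def c_def using funpow_in[OF F vn] by blast+
  have g: "Op v p f = f \<circ> rho a b c" unfolding Op_def a_def b_def c_def by simp
  have bij: "bij_betw (rho a b c) {1..n} {1..n}" using rho_bij[OF abcS ab bc ac] .
  have fpi: "f \<in> {1..n} \<rightarrow>\<^sub>E {1..n}" and fdeg: "\<forall>i\<in>{1..n}. card {x\<in>{1..n}. f x = i} = d i"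
    using F unfolding Fd_def by auto
  have G1: "Op v p f \<in> Fd n d"
  proof -
    have "Op v p f \<in> {1..n} \<rightarrow>\<^sub>E {1..n}"
    proof (rule PiE_I)
      fix z assume "z \<in> {1..n}"
      then have "rho a b c z \<in> {1..n}" using bij by (meson bij_betwE)
      then show "Op v p f z \<in> {1..n}" using fpi g by auto
    next
      fix z assume z: "z \<notin> {1..n}"
      then have "z \<noteq> a" "z \<noteq> b" "z \<noteq> c" using abcS by auto
      then have "rho a b c z = z" by (simp add: rho_def)
      then show "Op v p f z = undefined" using fpi z g by auto
    qed
    moreover have "\<forall>i\<in>{1..n}. card {x\<in>{1..n}. Op v p f x = i} = d i"
      using card_comp_perm[OF bij, of f] fdeg g by simp
    ultimately show ?thesis unfolding Fd_def by blast
  qed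
  have orb: "\<And>i. i \<le> k \<Longrightarrow> (Op v p f ^^ i) v = (f^^(tau p i)) v"
    using Op_orbit[OF inj p] by blast
  have tault: "\<And>i. i < k \<Longrightarrow> tau p i < k" using p by (auto simp: tau_def)
  have tautau: "\<And>i. tau p (tau p i) = i" by (auto simp: tau_def)
  have G2: "inj_on (\<lambda>i. (Op v p f^^i) v) {0..<k}"
  proof (rule inj_onI)
    fix i j assume ij: "i \<in> {0..<k}" "j \<in> {0..<k}" "(Op v p f^^i) v = (Op v p f^^j) v"
    then have "(f^^(tau p i)) v = (f^^(tau p j)) v" using orb by simp
    moreover have "tau p i \<in> {0..<k}" "tau p j \<in> {0..<k}" using ij tault by auto
    ultimately have "tau p i = tau p j" using inj_onD[OF inj] by blast
    then show "i = j" using tautau by metis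
  qed
  have G3: "tau p t < k" using tault t .
  have "tau p k = k" using p by (simp add: tau_def)
  then have "(Op v p f^^k) v = (f^^k) v" using orb[of k] by simp
  also have "\<dots> = (f^^t) v" by (rule eq)
  also have "\<dots> = (f^^(tau p (tau p t))) v" using tautau by simp
  also have "\<dots> = (Op v p f ^^ tau p t) v" using orb[of "tau p t"] G3 by simp
  finally have G4: "(Op v p f^^k) v = (Op v p f ^^ tau p t) v" .
  have tv: "tau p (p-1) = p-1" "tau p p = Suc p" "tau p (Suc p) = p" using p by (auto simp: tau_def)
  have "(Op v p f^^(p-1)) v = a" using orb[of "p-1"] p tv(1) unfolding a_def by simp
  moreover have "(Op v p f^^p) v = c" using orb[of p] p tv(2) unfolding c_def by simp
  moreover have "(Op v p f^^(Suc p)) v = b" using orb[of "Suc p"] p tv(3) unfolding b_def by simp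
  ultimately have "Op v p (Op v p f) = Op v p f \<circ> rho a c b" by (simp add: Op_def)
  also have "\<dots> = f" unfolding g
  proof
    fix z show "(f \<circ> rho a b c \<circ> rho a c b) z = f z"
      using ab bc ac by (simp add: rho_def)
  qed
  finally show ?thesis using G1 G2 G3 G4 by blast
qed


definition Aset :: "nat \<Rightarrow> (nat \<Rightarrow> nat) \<Rightarrow> nat \<Rightarrow> nat \<Rightarrow> nat \<Rightarrow> (nat \<Rightarrow> nat) set" where
  "Aset n d v k t = {f \<in> Fd n d. six_len f v = k \<and> tail_len f v = t}"

lemma Aset_Op:
  assumes "f \<in> Aset n d v k t" "v \<in> {1..n}" "1\<le>p" "Suc p<k"
  shows "Op v p f \<in> Aset n d v k (tau p t) \<and> Op v p (Op v p f) = f"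
proof -
  have F: "f \<in> Fd n d" and h: "six_len f v = k \<and> tail_len f v = t"
    using assms(1) unfolding Aset_def by auto
  then have H: "inj_on (\<lambda>i. (f^^i) v) {0..<k} \<and> t<k \<and> (f^^k) v = (f^^t) v"
    using A_iff[OF F assms(2)] by blast
  have P: "Op v p f \<in> Fd n d \<and> inj_on (\<lambda>i. (Op v p f^^i) v) {0..<k} \<and> tau p t < k
    \<and> (Op v p f^^k) v = (Op v p f ^^ tau p t) v \<and> Op v p (Op v p f) = f"
    using Op_props[OF F assms(2) _ _ _ assms(3,4)] H by blast
  then have "six_len (Op v p f) v = k \<and> tail_len (Op v p f) v = tau p t"
    using A_iff[of "Op v p f" n d v k "tau p t"] assms(2) by blast
  then show ?thesis using P unfolding Aset_def by blast
qed

lemma card_shift: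
  assumes "v \<in> {1..n}" "1\<le>p" "Suc p<k"
  shows "card (Aset n d v k p) = card (Aset n d v k (Suc p))"
proof -
  have t1: "tau p p = Suc p" and t2: "tau p (Suc p) = p" by (auto simp: tau_def)
  have "bij_betw (Op v p) (Aset n d v k p) (Aset n d v k (Suc p))"
  proof (rule bij_betw_byWitness[where f' = "Op v p"])
    show "\<forall>f\<in>Aset n d v k p. Op v p (Op v p f) = f" using Aset_Op[OF _ assms] by blast
    show "\<forall>f\<in>Aset n d v k (Suc p). Op v p (Op v p f) = f" using Aset_Op[OF _ assms] by blast
    show "Op v p ` Aset n d v k p \<subseteq> Aset n d v k (Suc p)" using Aset_Op[OF _ assms] t1 by fastforce
    show "Op v p ` Aset n d v k (Suc p) \<subseteq> Aset n d v k p" using Aset_Op[OF _ assms] t2 by fastforce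
  qed
  then show ?thesis by (rule bij_betw_same_card)
qed

lemma card_all:
  assumes "v \<in> {1..n}"
  shows "1 \<le> j \<Longrightarrow> j < k \<Longrightarrow> card (Aset n d v k j) = card (Aset n d v k 1)"
proof (induction j)
  case 0 then show ?case by simp
next
  case (Suc j)
  show ?case
  proof (cases "j = 0")
    case True then show ?thesis by simp
  next
    case False
    then have "card (Aset n d v k j) = card (Aset n d v k 1)" using Suc by simp
    moreover have "card (Aset n d v k j) = card (Aset n d v k (Suc j))"
      using card_shift[OF assms, of j k] False Suc.prems by simp
    ultimately show ?thesis by simp
  qed
qed

lemma exists_map:
  fixes d :: "nat \<Rightarrow> nat"
  assumes "finite B"
  shows "finite A \<Longrightarrow> card A = (\<Sum>i\<in>B. d i) \<Longrightarrow>
    \<exists>g. (\<forall>x\<in>A. g x \<in> B) \<and> (\<forall>i\<in>B. card {x\<in>A. g x = i} = d i)"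
  using assms
proof (induction B arbitrary: A rule: finite_induct)
  case empty
  then show ?case by simp
next
  case (insert b B)
  have "card A = d b + (\<Sum>i\<in>B. d i)" using insert by simp
  then have "d b \<le> card A" by simp
  then obtain S where S: "S \<subseteq> A" "card S = d b" "finite S" by (rule obtain_subset_with_card_n)
  have "card (A - S) = (\<Sum>i\<in>B. d i)"
    using card_Diff_subset[OF S(3,1)] \<open>card A = d b + (\<Sum>i\<in>B. d i)\<close> S(2) by simp
  then obtain g' where g': "\<forall>x\<in>A - S. g' x \<in> B" "\<forall>i\<in>B. card {x\<in>A - S. g' x = i} = d i"
    using insert.IH[of "A - S"] insert.prems insert.hyps by auto
  define g where "g x = (if x \<in> S then b else g' x)" for x
  have "\<forall>x\<in>A. g x \<in> insert b B" using g' unfolding g_def by auto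
  moreover have "\<forall>i\<in>insert b B. card {x\<in>A. g x = i} = d i"
  proof
    fix i assume i: "i \<in> insert b B"
    show "card {x\<in>A. g x = i} = d i"
    proof (cases "i = b")
      case True
      have "{x\<in>A. g x = i} = S" using S(1) g'(1) insert.hyps(2) True unfolding g_def by auto
      then show ?thesis using S(2) True by simp
    next
      case False
      then have "{x\<in>A. g x = i} = {x\<in>A - S. g' x = i}" unfolding g_def by auto
      then show ?thesis using g'(2) i False by simp
    qed
  qed
  ultimately show ?case by blast
qed

lemma Fd_nonempty:
  assumes "degree_seq n d"
  shows "Fd n d \<noteq> {}"
proof -
  obtain g where g: "\<forall>x\<in>{1..n}. g x \<in> {1..n}" "\<forall>i\<in>{1..n}. card {x\<in>{1..n}. g x = i} = d i"
    using exists_map[of "{1..n}" "{1..n}" d] assms unfolding degree_seq_def by auto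
  have e: "\<forall>i\<in>{1..n}. {x\<in>{1..n}. restrict g {1..n} x = i} = {x\<in>{1..n}. g x = i}" by auto
  have "restrict g {1..n} \<in> {1..n} \<rightarrow>\<^sub>E {1..n}" using g(1) by auto
  then have "restrict g {1..n} \<in> Fd n d"
    unfolding Fd_def using g(2) e by simp
  then show ?thesis by blast
qed

lemma Fd_finite: "finite (Fd n d)"
proof -
  have "Fd n d \<subseteq> {1..n} \<rightarrow>\<^sub>E {1..n}" unfolding Fd_def by blast
  then show ?thesis using finite_PiE[of "{1..n}" "\<lambda>_. {1..n::nat}"] finite_subset by blast
qed

lemma Pr_eq:
  assumes "degree_seq n d"
  shows "Pr n d Q = card {f\<in>Fd n d. Q f} / card (Fd n d)"
proof -
  have "Fd n d \<inter> {f. Q f} = {f\<in>Fd n d. Q f}" by blast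
  then show ?thesis unfolding Pr_def
    using measure_pmf_of_set[OF Fd_nonempty[OF assms] Fd_finite, of "{f. Q f}"] by simp
qed

theorem lemma3p12:
  fixes n :: nat and d :: "nat \<Rightarrow> nat" and v k j :: nat
  assumes "degree_seq n d"
    and "v \<in> {1..n}"
    and "Pr n d (\<lambda>f. tail_len f v > 0) > 0"
    and "k \<ge> 2"
    and "Pr n d (\<lambda>f. six_len f v = k \<and> tail_len f v > 0) > 0"
    and "j \<in> {1..k-1}"
  shows "Pr n d (\<lambda>f. tail_len f v = j \<and> six_len f v = k \<and> tail_len f v > 0)
           / Pr n d (\<lambda>f. six_len f v = k \<and> tail_len f v > 0) = 1 / real (k - 1)"
proof -
  let ?F = "Fd n d"
  have j: "1 \<le> j" "j < k" using assms(4,6) by auto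
  have N: "{f\<in>?F. tail_len f v = j \<and> six_len f v = k \<and> tail_len f v > 0} = Aset n d v k j"
    unfolding Aset_def using j by auto
  have D: "{f\<in>?F. six_len f v = k \<and> tail_len f v > 0} = (\<Union>t\<in>{1..k-1}. Aset n d v k t)"
  proof
    show "{f\<in>?F. six_len f v = k \<and> tail_len f v > 0} \<subseteq> (\<Union>t\<in>{1..k-1}. Aset n d v k t)"
    proof
      fix f assume f: "f \<in> {f\<in>?F. six_len f v = k \<and> tail_len f v > 0}"
      then have "tail_len f v < k"
        using A_iff[of f n d v k "tail_len f v"] assms(2) by blast
      then show "f \<in> (\<Union>t\<in>{1..k-1}. Aset n d v k t)" using f unfolding Aset_def by auto
    qed
    show "(\<Union>t\<in>{1..k-1}. Aset n d v k t) \<subseteq> {f\<in>?F. six_len f v = k \<and> tail_len f v > 0}"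
      unfolding Aset_def by auto
  qed
  have fin: "\<And>t. finite (Aset n d v k t)"
    unfolding Aset_def using Fd_finite by simp
  have "card (\<Union>t\<in>{1..k-1}. Aset n d v k t) = (\<Sum>t\<in>{1..k-1}. card (Aset n d v k t))"
    apply (rule card_UN_disjoint) apply simp using fin apply blast unfolding Aset_def by auto
  also have "\<dots> = (\<Sum>t\<in>{1..k-1}. card (Aset n d v k 1))"
  proof (rule sum.cong)
    fix t assume "t \<in> {1..k-1}"
    then have "1 \<le> t" "t < k" by auto
    then show "card (Aset n d v k t) = card (Aset n d v k 1)" by (rule card_all[OF assms(2)])
  qed simp
  also have "\<dots> = (k-1) * card (Aset n d v k 1)" by simp
  finally have cD: "card {f\<in>?F. six_len f v = k \<and> tail_len f v > 0} = (k-1) * card (Aset n d v k 1)"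
    using D by simp
  have cN: "card {f\<in>?F. tail_len f v = j \<and> six_len f v = k \<and> tail_len f v > 0} = card (Aset n d v k 1)"
    using N card_all[OF assms(2) j] by simp
  have cF: "card ?F > 0" using Fd_nonempty[OF assms(1)] Fd_finite card_gt_0_iff by blast
  have "card {f\<in>?F. six_len f v = k \<and> tail_len f v > 0} \<noteq> 0"
  proof
    assume "card {f\<in>?F. six_len f v = k \<and> tail_len f v > 0} = 0"
    then have "Pr n d (\<lambda>f. six_len f v = k \<and> tail_len f v > 0) = 0"
      unfolding Pr_eq[OF assms(1)] by simp
    then show False using assms(5) by linarith
  qed
  then have cA: "card (Aset n d v k 1) > 0" using cD by simp
  have k1: "real (k-1) > 0" using assms(4) by simp
  define A where "A = real (card (Aset n d v k 1))"
  define C where "C = real (card ?F)"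
  have A0: "A > 0" "C > 0" using cA cF unfolding A_def C_def by auto
  have e1: "Pr n d (\<lambda>f. tail_len f v = j \<and> six_len f v = k \<and> tail_len f v > 0) = A / C"
    unfolding Pr_eq[OF assms(1)] cN A_def C_def by simp
  have e2: "Pr n d (\<lambda>f. six_len f v = k \<and> tail_len f v > 0) = real (k-1) * A / C"
    unfolding Pr_eq[OF assms(1)] cD A_def C_def by simp
  have "A / C / (real (k-1) * A / C) = 1 / real (k-1)"
    using A0 k1 by (simp add: field_simps)
  then show ?thesis unfolding e1 e2 .
qed

end
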